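(* Let $(S,W)$ be the spherical Coxeter complex of type $D_n$ ($n\ge4$). Let $\lambda_i:=\frac{1}{\sqrt{2(n+1-i)}}$ for $i\neq2$ and $\lambda_2:=\lambda_1$. Let $\alpha\subset S$ be a root and let $v$ be a vertex of type $i$ in the interior of $\alpha$. Then $\sin d(v,\partial\alpha)\in\{\lambda_i,2\lambda_i\}$. Moreover, if $i=n$ then $\sin d(v,\partial\alpha)=\lambda_n$, and if $i\in\{1,2\}$ then $\sin d(v,\partial\alpha)=2\lambda_1=2\lambda_2$.
   Context: $S$ is the unit sphere in $\mathbb{R}^n$ with standard basis $e_1,\dots,e_n$, and $W$ is the Weyl group of $D_n$ (permutations of coordinates combined with an even number of sign changes), acting by reflections. Roots of $(S,W)$ are the closed hemispheres $\{x:\langle x,c\rangle\ge0\}$ with center $c=\frac{1}{\sqrt2}(\pm e_j\pm e_k)$, $j\ne k$; $\partial\alpha$ is the boundary great sphere of $\alpha$. Vertex types: a vertex is of type $i\neq 2$ if it lies in the $W$-orbit of $\frac{1}{\sqrt{n+1-i}}(e_i+e_{i+1}+\dots+e_n)$, and of type $2$ if it lies in the $W$-orbit of $\frac{1}{\sqrt n}(-e_1+e_2+\dots+e_n)$. The interior of $\alpha$ is $\alpha\setminus\partial\alpha$; $d$ is the spherical metric. *)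

theory Defs
  imports "HOL-Analysis.Analysis"
begin

text \<open>Points of R^n are represented as functions nat => real, with coordinates
indexed by 1..n and value 0 outside {1..n}.\<close>

definition vec_n :: "nat \<Rightarrow> (nat \<Rightarrow> real) set" where
  "vec_n n = {x. \<forall>k. k \<notin> {1..n} \<longrightarrow> x k = 0}"

definition ip :: "nat \<Rightarrow> (nat \<Rightarrow> real) \<Rightarrow> (nat \<Rightarrow> real) \<Rightarrow> real" where
  "ip n x y = (\<Sum>k\<in>{1..n}. x k * y k)"

definition sph :: "nat \<Rightarrow> (nat \<Rightarrow> real) set" where
  "sph n = {x \<in> vec_n n. ip n x x = 1}"

definition sdist :: "nat \<Rightarrow> (nat \<Rightarrow> real) \<Rightarrow> (nat \<Rightarrow> real) \<Rightarrow> real" where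
  "sdist n x y = arccos (ip n x y)"

definition sdist_set :: "nat \<Rightarrow> (nat \<Rightarrow> real) \<Rightarrow> (nat \<Rightarrow> real) set \<Rightarrow> real" where
  "sdist_set n x A = Inf (sdist n x ` A)"

definition ebas :: "nat \<Rightarrow> nat \<Rightarrow> real" where
  "ebas j = (\<lambda>k. if k = j then 1 else 0)"

definition weylD :: "nat \<Rightarrow> ((nat \<Rightarrow> real) \<Rightarrow> (nat \<Rightarrow> real)) set" where
  "weylD n = {(\<lambda>x k. if k \<in> {1..n} then s k * x (\<sigma> k) else 0) | \<sigma> s.
     \<sigma> permutes {1..n} \<and> (\<forall>k\<in>{1..n}. s k = 1 \<or> s k = -1) \<and> (\<Prod>k\<in>{1..n}. s k) = 1}"

definition base_vertex :: "nat \<Rightarrow> nat \<Rightarrow> (nat \<Rightarrow> real)" where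
  "base_vertex n i =
     (if i = 2 then (\<lambda>k. if k = 1 then - 1 / sqrt (real n)
                         else if k \<in> {2..n} then 1 / sqrt (real n) else 0)
      else (\<lambda>k. if k \<in> {i..n} then 1 / sqrt (real (n + 1 - i)) else 0))"

definition vertex_of_type :: "nat \<Rightarrow> nat \<Rightarrow> (nat \<Rightarrow> real) \<Rightarrow> bool" where
  "vertex_of_type n i v \<longleftrightarrow> i \<in> {1..n} \<and> (\<exists>w\<in>weylD n. v = w (base_vertex n i))"

definition root_center :: "nat \<Rightarrow> (nat \<Rightarrow> real) \<Rightarrow> bool" where
  "root_center n c \<longleftrightarrow> (\<exists>j k a b. j \<in> {1..n} \<and> k \<in> {1..n} \<and> j \<noteq> k \<and>
      (a = 1 \<or> a = -1) \<and> (b = 1 \<or> b = (-1::real)) \<and>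
      c = (\<lambda>m. (a * ebas j m + b * ebas k m) / sqrt 2))"

definition hemisphere :: "nat \<Rightarrow> (nat \<Rightarrow> real) \<Rightarrow> (nat \<Rightarrow> real) set" where
  "hemisphere n c = {x \<in> sph n. ip n x c \<ge> 0}"

definition great_sphere :: "nat \<Rightarrow> (nat \<Rightarrow> real) \<Rightarrow> (nat \<Rightarrow> real) set" where
  "great_sphere n c = {x \<in> sph n. ip n x c = 0}"

definition lam :: "nat \<Rightarrow> nat \<Rightarrow> real" where
  "lam n i = (if i = 2 then 1 / sqrt (2 * real n) else 1 / sqrt (2 * real (n + 1 - i)))"

end

theory Submission
  imports Defs
begin

lemma ip_comm: "ip n x y = ip n y x"
  unfolding ip_def by (simp add: mult.commute)

lemma ip_lin: "ip n (\<lambda>k. x k - s * y k) z = ip n x z - s * ip n y z"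
  unfolding ip_def by (simp add: algebra_simps sum_subtractf sum_distrib_left)

lemma ip_scale: "ip n (\<lambda>k. x k / s) z = ip n x z / s"
  unfolding ip_def by (simp add: sum_divide_distrib)

lemma ip_expand: "ip n (\<lambda>k. x k - s * y k) (\<lambda>k. x k - s * y k)
   = ip n x x - 2 * s * ip n x y + s^2 * ip n y y"
  unfolding ip_def
  by (simp add: algebra_simps sum.distrib sum_subtractf sum_distrib_left power2_eq_square)

lemma ip_nonneg: "0 \<le> ip n x x"
  unfolding ip_def by (auto intro: sum_nonneg)

lemma ip_ebas: "l \<in> {1..n} \<Longrightarrow> ip n (ebas l) y = y l"
proof -
  assume l: "l \<in> {1..n}"
  have "ip n (ebas l) y = (\<Sum>k\<in>{1..n}. if k = l then y k else 0)"
    unfolding ip_def ebas_def by (rule sum.cong) auto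
  also have "\<dots> = y l" using l by simp
  finally show ?thesis .
qed

lemma cs1: assumes "ip n x x = 1" shows "(ip n w x)^2 \<le> ip n w w"
proof -
  have "0 \<le> ip n (\<lambda>k. w k - ip n w x * x k) (\<lambda>k. w k - ip n w x * x k)"
    by (rule ip_nonneg)
  also have "\<dots> = ip n w w - (ip n w x)^2"
    unfolding ip_expand using assms by (simp add: power2_eq_square)
  finally show ?thesis by simp
qed

lemma dist_gs:
  assumes v: "v \<in> sph n" and c: "c \<in> sph n" and t: "t = ip n v c" "0 \<le> t"
    and ex: "\<exists>x. x \<in> great_sphere n c"
  shows "sin (sdist_set n v (great_sphere n c)) = t"
proof -
  have vv: "ip n v v = 1" and cc: "ip n c c = 1" using v c by (auto simp: sph_def)
  have t2: "t^2 \<le> 1" using cs1[OF cc, of v] vv t by simp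
  define w where "w = (\<lambda>k. v k - t * c k)"
  have ww: "ip n w w = 1 - t^2" unfolding w_def ip_expand using vv cc t
    by (simp add: power2_eq_square)
  define r where "r = sqrt (1 - t^2)"
  have r0: "0 \<le> r" and r1: "r \<le> 1" using t2 unfolding r_def by auto
  have bound: "ip n v x \<le> r \<and> -1 \<le> ip n v x" if x: "x \<in> great_sphere n c" for x
  proof -
    have xx: "ip n x x = 1" and xc: "ip n x c = 0" using x by (auto simp: great_sphere_def sph_def)
    have "ip n w x = ip n v x" unfolding w_def ip_lin using xc ip_comm[of n c x] by simp
    hence "(ip n v x)^2 \<le> 1 - t^2" using cs1[OF xx, of w] ww by simp
    hence a: "ip n v x \<le> r" unfolding r_def by (rule real_le_rsqrt)
    have "(ip n v x)^2 \<le> 1" using cs1[OF xx, of v] vv by simp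
    hence "\<bar>ip n v x\<bar> \<le> 1" by (simp add: abs_square_le_1)
    thus ?thesis using a by auto
  qed
  have att: "\<exists>x \<in> great_sphere n c. ip n v x = r"
  proof (cases "t < 1")
    case True
    have "t*t \<le> t*1" using True t by (intro mult_left_mono) auto
    hence tl1: "t^2 < 1" using True by (simp add: power2_eq_square)
    hence rpos: "0 < r" unfolding r_def by simp
    have rsq: "r^2 = 1 - t^2" unfolding r_def using t2 by simp
    define x where "x = (\<lambda>k. w k / r)"
    have wv: "w \<in> vec_n n" using v c unfolding w_def sph_def vec_n_def by auto
    have "x \<in> vec_n n" using wv unfolding x_def vec_n_def by auto
    moreover have "ip n x x = 1"
    proof -
      have "ip n x x = ip n w x / r" unfolding x_def ip_scale ..
      also have "ip n w x = ip n x w" by (rule ip_comm)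
      also have "\<dots> = ip n w w / r" unfolding x_def ip_scale ..
      finally show ?thesis using ww rpos rsq tl1 by (simp add: power2_eq_square)
    qed
    moreover have "ip n x c = 0" unfolding x_def ip_scale w_def ip_lin using cc t by simp
    moreover have "ip n v x = r"
    proof -
      have "ip n v x = ip n x v" by (rule ip_comm)
      also have "\<dots> = ip n w v / r" unfolding x_def ip_scale ..
      also have "ip n w v = 1 - t^2" unfolding w_def ip_lin using vv t ip_comm[of n c v]
        by (simp add: power2_eq_square)
      also have "(1 - t^2) / r = r * r / r" using rsq by (simp add: power2_eq_square)
      also have "\<dots> = r" using rpos by simp
      finally show ?thesis .
    qed
    ultimately show ?thesis unfolding great_sphere_def sph_def by auto
  next
    case False
    moreover have "\<bar>t\<bar> \<le> 1" using t2 by (simp add: abs_square_le_1)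
    ultimately have "t = 1" using t by simp
    hence r: "r = 0" unfolding r_def by simp
    obtain x where x: "x \<in> great_sphere n c" using ex by auto
    have "(ip n v x)^2 \<le> 1 - t^2"
    proof -
      have xx: "ip n x x = 1" and xc: "ip n x c = 0" using x by (auto simp: great_sphere_def sph_def)
      have "ip n w x = ip n v x" unfolding w_def ip_lin using xc ip_comm[of n c x] by simp
      thus ?thesis using cs1[OF xx, of w] ww by simp
    qed
    hence "ip n v x = 0" using \<open>t = 1\<close> by simp
    thus ?thesis using x r by auto
  qed
  have "sdist_set n v (great_sphere n c) = arccos r"
    unfolding sdist_set_def
  proof (rule cInf_eq_minimum)
    show "arccos r \<in> sdist n v ` great_sphere n c" using att unfolding sdist_def by force
  next
    fix y assume "y \<in> sdist n v ` great_sphere n c"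
    then obtain x where x: "x \<in> great_sphere n c" and y: "y = arccos (ip n v x)"
      unfolding sdist_def by auto
    show "arccos r \<le> y" unfolding y using bound[OF x] r1 by (intro arccos_le_arccos) auto
  qed
  moreover have "sin (arccos r) = t"
  proof -
    have "sin (arccos r) = sqrt (1 - r^2)" using r0 r1 by (simp add: sin_arccos)
    also have "r^2 = 1 - t^2" unfolding r_def using t2 by simp
    finally show ?thesis using t by simp
  qed
  ultimately show ?thesis by simp
qed

lemma ip_lin2: "ip n (\<lambda>m. (a * x m + b * y m) / s) z = (a * ip n x z + b * ip n y z) / s"
  unfolding ip_def by (simp add: algebra_simps sum.distrib sum_distrib_left flip: sum_divide_distrib)

lemma sq2: "0 < x \<Longrightarrow> sqrt 2 * (1 / sqrt (2 * x)) = 1 / sqrt (x::real)"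
  by (simp add: real_sqrt_mult)

lemma base_vals:
  assumes i: "i \<in> {1..n}" and p: "p \<in> {1..n}"
  shows "base_vertex n i p \<in> {0, sqrt 2 * lam n i, - (sqrt 2 * lam n i)}"
    and "i \<in> {1,2} \<Longrightarrow> base_vertex n i p \<noteq> 0"
    and "i = n \<Longrightarrow> i \<noteq> 2 \<Longrightarrow> base_vertex n i p \<noteq> 0 \<Longrightarrow> p = n"
proof -
  have np: "0 < real n" using p by auto
  have mp: "0 < real (n + 1 - i)" using i by auto
  show "base_vertex n i p \<in> {0, sqrt 2 * lam n i, - (sqrt 2 * lam n i)}"
  proof (cases "i = 2")
    case True
    thus ?thesis using p sq2[OF np] unfolding base_vertex_def lam_def by auto
  next
    case False
    thus ?thesis using p sq2[OF mp] unfolding base_vertex_def lam_def by auto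
  qed
  show "i \<in> {1,2} \<Longrightarrow> base_vertex n i p \<noteq> 0"
    using p np unfolding base_vertex_def by auto
  show "i = n \<Longrightarrow> i \<noteq> 2 \<Longrightarrow> base_vertex n i p \<noteq> 0 \<Longrightarrow> p = n"
    using p unfolding base_vertex_def by (auto split: if_splits)
qed

theorem lemma2p14:
  fixes n i :: nat and c v :: "nat \<Rightarrow> real" and \<alpha> :: "(nat \<Rightarrow> real) set"
  assumes "n \<ge> 4"
    and "root_center n c" and "\<alpha> = hemisphere n c"
    and "vertex_of_type n i v"
    and "v \<in> \<alpha> - great_sphere n c"
  shows "sin (sdist_set n v (great_sphere n c)) \<in> {lam n i, 2 * lam n i}
       \<and> (i = n \<longrightarrow> sin (sdist_set n v (great_sphere n c)) = lam n n)
       \<and> (i \<in> {1, 2} \<longrightarrow> sin (sdist_set n v (great_sphere n c)) = 2 * lam n 1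
                        \<and> 2 * lam n 1 = 2 * lam n 2)"
proof -
  obtain j k a b where jk: "j \<in> {1..n}" "k \<in> {1..n}" "j \<noteq> k"
    and ab: "a = 1 \<or> a = -1" "b = 1 \<or> b = (-1::real)"
    and cdef: "c = (\<lambda>m. (a * ebas j m + b * ebas k m) / sqrt 2)"
    using assms(2) unfolding root_center_def by blast
  have ipc: "ip n y c = (a * y j + b * y k) / sqrt 2" for y
  proof -
    have "ip n y c = ip n c y" by (rule ip_comm)
    also have "\<dots> = (a * ip n (ebas j) y + b * ip n (ebas k) y) / sqrt 2"
      unfolding cdef by (rule ip_lin2)
    finally show ?thesis using jk by (simp add: ip_ebas)
  qed
  have cj: "c j = a / sqrt 2" and ck: "c k = b / sqrt 2"
    using jk unfolding cdef ebas_def by auto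
  have csph: "c \<in> sph n"
  proof -
    have "c \<in> vec_n n" using jk unfolding cdef vec_n_def ebas_def by auto
    moreover have "ip n c c = 1" unfolding ipc cj ck using ab
      by (auto simp: field_simps)
    ultimately show ?thesis unfolding sph_def by auto
  qed
  have "\<exists>l::nat. (l = 1 \<or> l = 2 \<or> l = 3) \<and> l \<noteq> j \<and> l \<noteq> k" by presburger
  then obtain l where l: "l \<in> {1,2,3::nat}" "l \<noteq> j" "l \<noteq> k" by auto
  have lin: "l \<in> {1..n}" using l assms(1) by auto
  have ex: "\<exists>x. x \<in> great_sphere n c"
  proof
    have "ebas l \<in> vec_n n" using lin unfolding vec_n_def ebas_def by auto
    moreover have "ip n (ebas l) (ebas l) = 1" using ip_ebas[OF lin, of "ebas l"] by (simp add: ebas_def)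
    moreover have "ip n (ebas l) c = 0" using l lin unfolding ipc ebas_def by auto
    ultimately show "ebas l \<in> great_sphere n c" unfolding great_sphere_def sph_def by auto
  qed
  have vsph: "v \<in> sph n" and tpos: "0 < ip n v c"
    using assms(3,5) unfolding hemisphere_def great_sphere_def by auto
  define t where "t = ip n v c"
  have sin_eq: "sin (sdist_set n v (great_sphere n c)) = t"
    using dist_gs[OF vsph csph t_def] tpos ex unfolding t_def by auto
  have i: "i \<in> {1..n}" and "\<exists>w\<in>weylD n. v = w (base_vertex n i)"
    using assms(4) unfolding vertex_of_type_def by auto
  then obtain \<sigma> s where sig: "\<sigma> permutes {1..n}" and s: "\<forall>k\<in>{1..n}. s k = 1 \<or> s k = -1"
    and vdef: "v = (\<lambda>k. if k \<in> {1..n} then s k * base_vertex n i (\<sigma> k) else 0)"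
    unfolding weylD_def by blast
  define L where "L = lam n i"
  have Lpos: "0 < L" using i unfolding L_def lam_def by auto
  define B where "B = base_vertex n i"
  have sj: "\<sigma> j \<in> {1..n}" and sk: "\<sigma> k \<in> {1..n}" and sjk: "\<sigma> j \<noteq> \<sigma> k"
    using jk sig permutes_in_image[OF sig] permutes_inj[OF sig] by (auto dest: injD)
  define P where "P = a * v j"
  define Q where "Q = b * v k"
  have tPQ: "t = (P + Q) / sqrt 2" unfolding t_def ipc P_def Q_def ..
  have Pv: "P = a * s j * B (\<sigma> j)" using jk unfolding P_def vdef B_def by simp
  have Qv: "Q = b * s k * B (\<sigma> k)" using jk unfolding Q_def vdef B_def by simp
  have sgn: "a * s j = 1 \<or> a * s j = -1" "b * s k = 1 \<or> b * s k = -1"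
    using ab s jk by auto
  have P3: "P \<in> {0, sqrt 2 * L, - (sqrt 2 * L)}"
    using base_vals(1)[OF i sj] sgn unfolding Pv B_def L_def by auto
  have Q3: "Q \<in> {0, sqrt 2 * L, - (sqrt 2 * L)}"
    using base_vals(1)[OF i sk] sgn unfolding Qv B_def L_def by auto
  have tvals: "t \<in> {0, L, -L, 2*L, -(2*L)}"
    using P3 Q3 unfolding tPQ by auto
  have t1: "t \<in> {L, 2 * L}" using tvals tpos Lpos unfolding t_def by auto
  have t2: "i = n \<Longrightarrow> t = L"
  proof -
    assume "i = n"
    moreover have "i \<noteq> 2" using \<open>i = n\<close> assms(1) by auto
    ultimately have "B (\<sigma> j) = 0 \<or> B (\<sigma> k) = 0"
      using base_vals(3)[OF i sj] base_vals(3)[OF i sk] sjk unfolding B_def by metis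
    hence "P = 0 \<or> Q = 0" unfolding Pv Qv by auto
    thus "t = L" using t1 Lpos P3 Q3 unfolding tPQ by auto
  qed
  have t3: "i \<in> {1,2} \<Longrightarrow> t = 2 * L"
  proof -
    assume i12: "i \<in> {1,2}"
    have "P \<noteq> 0" "Q \<noteq> 0" using base_vals(2)[OF i sj i12] base_vals(2)[OF i sk i12] sgn
      unfolding Pv Qv B_def by auto
    thus "t = 2 * L" using t1 Lpos P3 Q3 unfolding tPQ by auto
  qed
  have l12: "lam n 1 = lam n 2" unfolding lam_def by simp
  have l1: "i \<in> {1,2} \<Longrightarrow> L = lam n 1" using l12 unfolding L_def by auto
  show ?thesis unfolding sin_eq using t1 t2 t3 l1 l12 unfolding L_def by auto
qed

end
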